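(* Assume that for every $x\in V$ the functions $s\mapsto H(x,s)$ and $s\mapsto f_l(x,s)$ ($l=1,\dots,m$) are nondecreasing on $[0,\infty)$, and that $H$ is $1$-Lipschitz in $s$, i.e. $|H(x,s)-H(x,t)|\le |s-t|$ for all $x\in V$ and all $s,t\in[0,\infty)$. Then there exists a unique vector $(u^1,u^2,\dots,u^m)$ of functions $u^l:V\to\mathbb{R}$ satisfying the discrete system (S).
   Context: Let $G=(V,E)$ be a finite, connected, undirected graph with at least two vertices. For $x,y\in V$, $d(x,y)$ denotes the graph (shortest-path) distance, and $\deg(x)=|\{y\in V:(x,y)\in E\}|$. The boundary of $G$ is $$\partial G=\Big\{x\in V:\ \exists\, y\in V \text{ with } \tfrac{1}{\deg(x)}\textstyle\sum_{(x,z)\in E} d(z,y)<d(x,y)\Big\},$$ and the interior is $G^o=V\setminus\partial G$. For $r:V\to\mathbb{R}$, the mean value at $x$ is $\overline{r}(x)=\frac{1}{\deg(x)}\sum_{(x,y)\in E} r(y)$. Fix an integer $m\ge1$. Let $H:V\times[0,\infty)\to\mathbb{R}$ and $f_l:V\times[0,\infty)\to\mathbb{R}$ ($l=1,\dots,m$) be continuous in the second variable with $H(x,0)=0$ and $f_l(x,0)=0$ for all $x\in V$; they are extended to negative arguments by $H(x,s)=-H(x,-s)$ and $f_l(x,s)=-f_l(x,-s)$ for $s<0$. Let $\phi^l:\partial G\to[0,\infty)$ ($l=1,\dots,m$) be boundary data satisfying $\phi^i(x)\phi^j(x)=0$ for all $x\in\partial G$ and $i\neq j$. The discrete system (S) for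 $(u^1,\dots,u^m)$, $u^l:V\to\mathbb{R}$, is: for every $l=1,\dots,m$, $$u^l(x)=\max\Big(H\Big(x,\ \overline{u}^l(x)-\sum_{p\neq l}\overline{u}^p(x)\Big)-f_l\big(x,u^l(x)\big),\ 0\Big)\quad (x\in G^o),\qquad u^l(x)=\phi^l(x)\quad (x\in\partial G).$$ *)

theory Defs
  imports "HOL-Analysis.Analysis"
begin

definition graph_ok :: "'a set \<Rightarrow> ('a \<Rightarrow> 'a \<Rightarrow> bool) \<Rightarrow> bool" where
  "graph_ok V E \<longleftrightarrow> finite V \<and> 2 \<le> card V
     \<and> (\<forall>x y. E x y \<longrightarrow> x \<in> V \<and> y \<in> V)
     \<and> (\<forall>x y. E x y \<longrightarrow> E y x)
     \<and> (\<forall>x. \<not> E x x)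
     \<and> (\<forall>x\<in>V. \<forall>y\<in>V. (x, y) \<in> {(a, b). E a b}\<^sup>*)"

definition neighbours :: "'a set \<Rightarrow> ('a \<Rightarrow> 'a \<Rightarrow> bool) \<Rightarrow> 'a \<Rightarrow> 'a set" where
  "neighbours V E x = {y \<in> V. E x y}"

definition deg :: "'a set \<Rightarrow> ('a \<Rightarrow> 'a \<Rightarrow> bool) \<Rightarrow> 'a \<Rightarrow> nat" where
  "deg V E x = card (neighbours V E x)"

definition gdist :: "('a \<Rightarrow> 'a \<Rightarrow> bool) \<Rightarrow> 'a \<Rightarrow> 'a \<Rightarrow> nat" where
  "gdist E x y = (LEAST n. (x, y) \<in> {(a, b). E a b} ^^ n)"

definition mean_val :: "'a set \<Rightarrow> ('a \<Rightarrow> 'a \<Rightarrow> bool) \<Rightarrow> ('a \<Rightarrow> real) \<Rightarrow> 'a \<Rightarrow> real" where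
  "mean_val V E r x = (\<Sum>y\<in>neighbours V E x. r y) / real (deg V E x)"

definition boundary :: "'a set \<Rightarrow> ('a \<Rightarrow> 'a \<Rightarrow> bool) \<Rightarrow> 'a set" where
  "boundary V E = {x \<in> V. \<exists>y\<in>V.
      mean_val V E (\<lambda>z. real (gdist E z y)) x < real (gdist E x y)}"

definition graph_interior :: "'a set \<Rightarrow> ('a \<Rightarrow> 'a \<Rightarrow> bool) \<Rightarrow> 'a set" where
  "graph_interior V E = V - boundary V E"

definition solves_S :: "'a set \<Rightarrow> ('a \<Rightarrow> 'a \<Rightarrow> bool) \<Rightarrow> nat \<Rightarrow> ('a \<Rightarrow> real \<Rightarrow> real)
    \<Rightarrow> (nat \<Rightarrow> 'a \<Rightarrow> real \<Rightarrow> real) \<Rightarrow> (nat \<Rightarrow> 'a \<Rightarrow> real) \<Rightarrow> (nat \<Rightarrow> 'a \<Rightarrow> real) \<Rightarrow> bool" where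
  "solves_S V E m H f \<phi> u \<longleftrightarrow>
     (\<forall>l\<in>{1..m}.
        (\<forall>x\<in>graph_interior V E.
           u l x = max (H x (mean_val V E (u l) x - (\<Sum>p\<in>{1..m} - {l}. mean_val V E (u p) x))
                         - f l x (u l x)) 0)
      \<and> (\<forall>x\<in>boundary V E. u l x = \<phi> l x))"

end

theory Submission
  imports Defs
begin

locale sysS =
  fixes V :: "'a set" and E :: "'a \<Rightarrow> 'a \<Rightarrow> bool" and m :: nat
    and H :: "'a \<Rightarrow> real \<Rightarrow> real" and f :: "nat \<Rightarrow> 'a \<Rightarrow> real \<Rightarrow> real"
    and \<phi> :: "nat \<Rightarrow> 'a \<Rightarrow> real"
  assumes G: "graph_ok V E"
    and m: "1 \<le> m"
    and f_cont: "\<And>l x. l \<in> {1..m} \<Longrightarrow> x \<in> V \<Longrightarrow> continuous_on {0..} (f l x)"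
    and H0: "\<And>x. x \<in> V \<Longrightarrow> H x 0 = 0"
    and f0: "\<And>l x. l \<in> {1..m} \<Longrightarrow> x \<in> V \<Longrightarrow> f l x 0 = 0"
    and H_odd: "\<And>x s. x \<in> V \<Longrightarrow> s < 0 \<Longrightarrow> H x s = - H x (- s)"
    and phi_nonneg: "\<And>l x. l \<in> {1..m} \<Longrightarrow> x \<in> boundary V E \<Longrightarrow> 0 \<le> \<phi> l x"
    and H_mono: "\<And>x. x \<in> V \<Longrightarrow> mono_on {0..} (H x)"
    and f_mono: "\<And>l x. l \<in> {1..m} \<Longrightarrow> x \<in> V \<Longrightarrow> mono_on {0..} (f l x)"
    and H_lip: "\<And>x s t. x \<in> V \<Longrightarrow> 0 \<le> s \<Longrightarrow> 0 \<le> t \<Longrightarrow> \<bar>H x s - H x t\<bar> \<le> \<bar>s - t\<bar>"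
begin

lemma finV: "finite V" and cardV: "2 \<le> card V"
  and Ein: "E x y \<Longrightarrow> x \<in> V \<and> y \<in> V"
  and conn: "x \<in> V \<Longrightarrow> y \<in> V \<Longrightarrow> (x, y) \<in> {(a, b). E a b}\<^sup>*"
  using G unfolding graph_ok_def by auto

lemma nb_sub: "neighbours V E x \<subseteq> V" and nb_fin: "finite (neighbours V E x)"
  using finV by (auto simp: neighbours_def)

lemma deg_le: "deg V E x \<le> card V"
  unfolding deg_def by (rule card_mono[OF finV nb_sub])

lemma mean_mono:
  assumes "\<And>y. y \<in> neighbours V E x \<Longrightarrow> g y \<le> h y"
  shows "mean_val V E g x \<le> mean_val V E h x"
  unfolding mean_val_def by (rule divide_right_mono) (auto intro: sum_mono assms)

lemma mean_nonneg:
  assumes "\<And>y. y \<in> neighbours V E x \<Longrightarrow> 0 \<le> g y"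
  shows "0 \<le> mean_val V E g x"
  unfolding mean_val_def by (auto intro!: divide_nonneg_nonneg sum_nonneg assms)

lemma mean_diff: "mean_val V E (\<lambda>y. g y - h y) x = mean_val V E g x - mean_val V E h x"
  unfolding mean_val_def by (simp add: sum_subtractf diff_divide_distrib)

lemma mean_add: "mean_val V E (\<lambda>y. g y + h y) x = mean_val V E g x + mean_val V E h x"
  unfolding mean_val_def by (simp add: sum.distrib add_divide_distrib)

lemma mean_sum: "mean_val V E (\<lambda>y. \<Sum>p\<in>P. g p y) x = (\<Sum>p\<in>P. mean_val V E (g p) x)"
  unfolding mean_val_def by (simp add: sum_divide_distrib[symmetric] sum.swap[of _ P])

lemma mean_abs: "\<bar>mean_val V E g x\<bar> \<le> mean_val V E (\<lambda>y. \<bar>g y\<bar>) x"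
  unfolding mean_val_def abs_divide by (auto intro: divide_right_mono sum_abs)

lemma mean_le_const:
  assumes "\<And>y. y \<in> neighbours V E x \<Longrightarrow> g y \<le> Q" "0 \<le> Q"
  shows "mean_val V E g x \<le> Q"
proof -
  have "sum g (neighbours V E x) \<le> real (deg V E x) * Q"
    unfolding deg_def using sum_bounded_above[of "neighbours V E x" g Q] assms by auto
  then show ?thesis unfolding mean_val_def using assms(2)
    by (cases "deg V E x = 0") (auto simp: field_simps)
qed

lemma mean_step:
  assumes "\<And>y. y \<in> neighbours V E x \<Longrightarrow> g y \<le> Q" "y0 \<in> neighbours V E x"
    "g y0 \<le> Q - e" "0 \<le> e"
  shows "mean_val V E g x \<le> Q - e / real (card V)"
proof -
  let ?N = "neighbours V E x"
  have dpos: "deg V E x \<ge> 1" unfolding deg_def using assms(2) nb_fin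
    by (metis One_nat_def Suc_leI card_gt_0_iff empty_iff)
  have "sum g ?N = g y0 + sum g (?N - {y0})"
    using sum.remove[OF nb_fin assms(2)] by simp
  also have "sum g (?N - {y0}) \<le> real (card (?N - {y0})) * Q"
    using sum_bounded_above[of "?N - {y0}" g Q] assms(1) by auto
  also have "card (?N - {y0}) = deg V E x - 1"
    unfolding deg_def using assms(2) nb_fin by simp
  finally have s: "sum g ?N \<le> Q - e + real (deg V E x - 1) * Q" using assms(3) by linarith
  have "real (deg V E x - 1) = real (deg V E x) - 1" using dpos by simp
  with s have s2: "sum g ?N \<le> real (deg V E x) * Q - e" by (simp add: algebra_simps)
  have dp: "real (deg V E x) > 0" using dpos by simp
  have "mean_val V E g x \<le> Q - e / real (deg V E x)"
    unfolding mean_val_def using s2 dp by (simp add: field_simps)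
  moreover have "e / real (deg V E x) \<ge> e / real (card V)"
    using deg_le[of x] dp assms(4) cardV by (intro divide_left_mono) auto
  ultimately show ?thesis by linarith
qed

lemma H_nonneg: "x \<in> V \<Longrightarrow> 0 \<le> s \<Longrightarrow> 0 \<le> H x s"
  using mono_onD[OF H_mono, of x 0 s] H0 by auto

lemma H_le: "x \<in> V \<Longrightarrow> 0 \<le> s \<Longrightarrow> H x s \<le> s"
  using H_lip[of x s 0] H0 by auto

lemma H_le_max: "x \<in> V \<Longrightarrow> H x s \<le> max s 0"
proof (cases "s < 0")
  case True
  assume x: "x \<in> V"
  then show ?thesis using True H_odd[OF x True] H_nonneg[OF x, of "-s"] by simp
next
  case False
  assume x: "x \<in> V"
  then show ?thesis using False H_le[OF x, of s] by simp
qed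

lemma H_lip_all: assumes x: "x \<in> V" shows "\<bar>H x s - H x t\<bar> \<le> \<bar>s - t\<bar>"
proof (cases "s < 0"; cases "t < 0")
  assume "s < 0" "t < 0"
  then show ?thesis using H_odd[OF x, of s] H_odd[OF x, of t] H_lip[OF x, of "-s" "-t"] by auto
next
  assume a: "s < 0" "\<not> t < 0"
  then show ?thesis using H_odd[OF x, of s] H_le[OF x, of t] H_le[OF x, of "-s"]
      H_nonneg[OF x, of t] H_nonneg[OF x, of "-s"] by auto
next
  assume a: "\<not> s < 0" "t < 0"
  then show ?thesis using H_odd[OF x, of t] H_le[OF x, of s] H_le[OF x, of "-t"]
      H_nonneg[OF x, of s] H_nonneg[OF x, of "-t"] by auto
next
  assume "\<not> s < 0" "\<not> t < 0"
  then show ?thesis using H_lip[OF x, of s t] by auto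
qed

lemma fixeq_lip:
  fixes g :: "real \<Rightarrow> real"
  assumes mono: "mono_on {0..} g"
    and t: "0 \<le> t" "t = max (w - g t) 0" and t': "0 \<le> t'" "t' = max (w' - g t') 0"
  shows "\<bar>t - t'\<bar> \<le> \<bar>w - w'\<bar>"
proof (cases "t' < t")
  case True
  then have "t = w - g t" using t t' by (auto simp: max_def split: if_splits)
  moreover have "t' \<ge> w' - g t'" using t' by simp
  moreover have "g t' \<le> g t" using mono_onD[OF mono, of t' t] True t t' by auto
  ultimately show ?thesis using True by auto
next
  case False
  show ?thesis
  proof (cases "t < t'")
    case True
    then have "t' = w' - g t'" using t t' by (auto simp: max_def split: if_splits)
    moreover have "t \<ge> w - g t" using t by simp
    moreover have "g t \<le> g t'" using mono_onD[OF mono, of t t'] True t t' by auto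
    ultimately show ?thesis using True by auto
  qed (use False in auto)
qed

definition Gs :: "nat \<Rightarrow> 'a \<Rightarrow> real \<Rightarrow> real" where
  "Gs l x w = (SOME t. 0 \<le> t \<and> t = max (w - f l x t) 0)"

lemma Gs_ex: assumes l: "l \<in> {1..m}" and x: "x \<in> V"
  shows "\<exists>t. 0 \<le> t \<and> t = max (w - f l x t) 0"
proof (cases "w \<le> 0")
  case True
  then show ?thesis using f0[OF l x] by (intro exI[of _ 0]) auto
next
  case False
  have c: "continuous_on {0..w} (\<lambda>t. t + f l x t)"
    by (intro continuous_intros continuous_on_subset[OF f_cont[OF l x]]) auto
  have "f l x 0 \<le> f l x w" using mono_onD[OF f_mono[OF l x], of 0 w] False by auto
  then have "0 + f l x 0 \<le> w" "w \<le> w + f l x w" using f0[OF l x] False by auto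
  from IVT'[of "\<lambda>t. t + f l x t", OF this(1) this(2) _ c] False
  obtain t where "0 \<le> t" "t \<le> w" "t + f l x t = w" by auto
  then show ?thesis by (intro exI[of _ t]) auto
qed

lemma Gs: assumes "l \<in> {1..m}" "x \<in> V"
  shows "0 \<le> Gs l x w" "Gs l x w = max (w - f l x (Gs l x w)) 0"
  using someI_ex[OF Gs_ex[OF assms, of w]] unfolding Gs_def by auto

lemma Gs_le: assumes "l \<in> {1..m}" "x \<in> V" shows "Gs l x w \<le> max w 0"
proof -
  have "f l x (Gs l x w) \<ge> 0" using mono_onD[OF f_mono[OF assms], of 0 "Gs l x w"] Gs[OF assms]
      f0[OF assms] by auto
  then show ?thesis using Gs[OF assms, of w] by linarith
qed

lemma Gs_lip: assumes "l \<in> {1..m}" "x \<in> V"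
  shows "\<bar>Gs l x w - Gs l x w'\<bar> \<le> \<bar>w - w'\<bar>"
  by (rule fixeq_lip[OF f_mono[OF assms]]) (use Gs[OF assms] in auto)


definition sv :: "(nat \<Rightarrow> 'a \<Rightarrow> real) \<Rightarrow> nat \<Rightarrow> 'a \<Rightarrow> real" where
  "sv u l x = mean_val V E (u l) x - (\<Sum>p\<in>{1..m} - {l}. mean_val V E (u p) x)"

definition T :: "(nat \<Rightarrow> 'a \<Rightarrow> real) \<Rightarrow> nat \<Rightarrow> 'a \<Rightarrow> real" where
  "T u = (\<lambda>l x. if x \<in> boundary V E then \<phi> l x else Gs l x (H x (sv u l x)))"

definition D :: "(nat \<Rightarrow> 'a \<Rightarrow> real) \<Rightarrow> (nat \<Rightarrow> 'a \<Rightarrow> real) \<Rightarrow> 'a \<Rightarrow> real" where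
  "D u v y = (\<Sum>l\<in>{1..m}. \<bar>u l y - v l y\<bar>)"

definition K :: "(nat \<Rightarrow> 'a \<Rightarrow> real) set" where
  "K = {u. \<forall>l\<in>{1..m}. \<forall>x\<in>V. 0 \<le> u l x}"

definition Fl :: "(nat \<Rightarrow> 'a \<Rightarrow> real) \<Rightarrow> nat \<Rightarrow> 'a \<Rightarrow> real" where
  "Fl u l y = u l y - (\<Sum>p\<in>{1..m} - {l}. u p y)"

lemma sv_Fl: "sv u l x = mean_val V E (Fl u l) x"
  unfolding sv_def Fl_def mean_diff mean_sum ..

lemma D_nonneg: "0 \<le> D u v y" unfolding D_def by (auto intro: sum_nonneg)

lemma bd_V: "boundary V E \<subseteq> V" unfolding boundary_def by auto

lemma T_K: "T u \<in> K"
  unfolding K_def T_def using Gs(1) phi_nonneg by auto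

lemma T_pos_le: assumes "l \<in> {1..m}" "x \<in> V" "x \<notin> boundary V E" "T u l x > 0"
  shows "T u l x \<le> sv u l x"
proof -
  have "T u l x = Gs l x (H x (sv u l x))" using assms unfolding T_def by simp
  moreover have "Gs l x (H x (sv u l x)) \<le> max (H x (sv u l x)) 0" by (rule Gs_le[OF assms(1,2)])
  moreover have "H x (sv u l x) \<le> max (sv u l x) 0" by (rule H_le_max[OF assms(2)])
  ultimately show ?thesis using assms(4) by linarith
qed

lemma mean_u_nonneg: "u \<in> K \<Longrightarrow> p \<in> {1..m} \<Longrightarrow> 0 \<le> mean_val V E (u p) x"
  using nb_sub[of x] unfolding K_def by (intro mean_nonneg) auto

lemma seg: assumes u: "u \<in> K" and x: "x \<in> V" "x \<notin> boundary V E"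
    and ab: "a \<in> {1..m}" "b \<in> {1..m}" "a \<noteq> b" and pos: "T u a x > 0"
  shows "T u b x = 0"
proof (rule ccontr)
  assume "T u b x \<noteq> 0"
  with T_K[of u] ab x have posb: "T u b x > 0" unfolding K_def by force
  have sa: "sv u a x > 0" using T_pos_le[OF ab(1) x pos] pos by linarith
  have sb: "sv u b x > 0" using T_pos_le[OF ab(2) x posb] posb by linarith
  have "mean_val V E (u b) x \<le> (\<Sum>p\<in>{1..m} - {a}. mean_val V E (u p) x)"
    using ab by (intro member_le_sum mean_u_nonneg[OF u]) auto
  moreover have "mean_val V E (u a) x \<le> (\<Sum>p\<in>{1..m} - {b}. mean_val V E (u p) x)"
    using ab by (intro member_le_sum mean_u_nonneg[OF u]) auto
  ultimately show False using sa sb unfolding sv_def by linarith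
qed

lemma D_split: "a \<in> {1..m} \<Longrightarrow> D u v y = \<bar>u a y - v a y\<bar> + (\<Sum>p\<in>{1..m} - {a}. \<bar>u p y - v p y\<bar>)"
  unfolding D_def by (rule sum.remove) auto

lemma pw1: assumes a: "a \<in> {1..m}" shows "\<bar>Fl u a y - Fl v a y\<bar> \<le> D u v y"
proof -
  have "Fl u a y - Fl v a y = (u a y - v a y) - (\<Sum>p\<in>{1..m} - {a}. u p y - v p y)"
    unfolding Fl_def by (simp add: sum_subtractf)
  moreover have "\<bar>\<Sum>p\<in>{1..m} - {a}. u p y - v p y\<bar> \<le> (\<Sum>p\<in>{1..m} - {a}. \<bar>u p y - v p y\<bar>)"
    by (rule sum_abs)
  ultimately show ?thesis using D_split[OF a, of u v y] by linarith
qed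

lemma pw2: assumes u: "u \<in> K" and v: "v \<in> K" and y: "y \<in> V"
    and ab: "a \<in> {1..m}" "b \<in> {1..m}" "a \<noteq> b"
  shows "Fl u a y + Fl v b y \<le> D u v y"
proof -
  have "u b y \<le> (\<Sum>p\<in>{1..m} - {a}. u p y)"
    using ab u y unfolding K_def by (intro member_le_sum) auto
  moreover have "v a y \<le> (\<Sum>p\<in>{1..m} - {b}. v p y)"
    using ab v y unfolding K_def by (intro member_le_sum) auto
  moreover have "\<bar>u b y - v b y\<bar> \<le> (\<Sum>p\<in>{1..m} - {a}. \<bar>u p y - v p y\<bar>)"
    using ab by (intro member_le_sum) auto
  ultimately show ?thesis unfolding Fl_def using D_split[OF ab(1), of u v y] by linarith
qed

lemma lip1: assumes u: "u \<in> K" and v: "v \<in> K" and x: "x \<in> V" "x \<notin> boundary V E"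
    and a: "a \<in> {1..m}"
  shows "\<bar>T u a x - T v a x\<bar> \<le> mean_val V E (D u v) x"
proof -
  have "\<bar>T u a x - T v a x\<bar> \<le> \<bar>H x (sv u a x) - H x (sv v a x)\<bar>"
    using x Gs_lip[OF a x(1)] unfolding T_def by simp
  also have "\<dots> \<le> \<bar>sv u a x - sv v a x\<bar>" by (rule H_lip_all[OF x(1)])
  also have "\<dots> = \<bar>mean_val V E (\<lambda>y. Fl u a y - Fl v a y) x\<bar>"
    unfolding sv_Fl mean_diff ..
  also have "\<dots> \<le> mean_val V E (\<lambda>y. \<bar>Fl u a y - Fl v a y\<bar>) x" by (rule mean_abs)
  also have "\<dots> \<le> mean_val V E (D u v) x" by (rule mean_mono) (rule pw1[OF a])
  finally show ?thesis .
qed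

lemma lip2: assumes u: "u \<in> K" and v: "v \<in> K" and x: "x \<in> V" "x \<notin> boundary V E"
    and ab: "a \<in> {1..m}" "b \<in> {1..m}" "a \<noteq> b" and pa: "T u a x > 0" and pb: "T v b x > 0"
  shows "T u a x + T v b x \<le> mean_val V E (D u v) x"
proof -
  have "T u a x + T v b x \<le> sv u a x + sv v b x"
    using T_pos_le[OF ab(1) x pa] T_pos_le[OF ab(2) x pb] by linarith
  also have "\<dots> = mean_val V E (\<lambda>y. Fl u a y + Fl v b y) x" unfolding sv_Fl mean_add ..
  also have "\<dots> \<le> mean_val V E (D u v) x"
    by (rule mean_mono) (use nb_sub pw2[OF u v _ ab] in auto)
  finally show ?thesis .
qed


lemma D_T_bd: "x \<in> boundary V E \<Longrightarrow> D (T u) (T v) x = 0"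
  unfolding D_def T_def by simp

lemma lip: assumes u: "u \<in> K" and v: "v \<in> K" and x: "x \<in> V"
  shows "D (T u) (T v) x \<le> mean_val V E (D u v) x"
proof (cases "x \<in> boundary V E")
  case True
  then show ?thesis using D_T_bd mean_nonneg[of x "D u v"] D_nonneg by auto
next
  case nb: False
  have nnU: "\<And>l. l \<in> {1..m} \<Longrightarrow> 0 \<le> T u l x" and nnV: "\<And>l. l \<in> {1..m} \<Longrightarrow> 0 \<le> T v l x"
    using T_K[of u] T_K[of v] x unfolding K_def by auto
  show ?thesis
  proof (cases "\<exists>a\<in>{1..m}. \<exists>b\<in>{1..m}. a \<noteq> b \<and> T u a x > 0 \<and> T v b x > 0")
    case True
    then obtain a b where ab: "a \<in> {1..m}" "b \<in> {1..m}" "a \<noteq> b" and pa: "T u a x > 0"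
      and pb: "T v b x > 0" by blast
    have "\<And>l. l \<in> {1..m} \<Longrightarrow> \<bar>T u l x - T v l x\<bar> = (if l = a then T u a x else 0) + (if l = b then T v b x else 0)"
    proof -
      fix l assume l: "l \<in> {1..m}"
      have z1: "l \<noteq> a \<Longrightarrow> T u l x = 0" using seg[OF u x(1) nb ab(1) l _ pa] by auto
      have z2: "l \<noteq> b \<Longrightarrow> T v l x = 0" using seg[OF v x(1) nb ab(2) l _ pb] by auto
      show "\<bar>T u l x - T v l x\<bar> = (if l = a then T u a x else 0) + (if l = b then T v b x else 0)"
      proof (cases "l = a")
        case True
        then have "l \<noteq> b" using ab(3) by auto
        then show ?thesis using True z2 pa by simp
      next
        case False
        show ?thesis
        proof (cases "l = b")
          case True
          then show ?thesis using False z1 pb by simp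
        qed (use False z1 z2 in simp)
      qed
    qed
    then have "D (T u) (T v) x = (\<Sum>l\<in>{1..m}. (if l = a then T u a x else 0) + (if l = b then T v b x else 0))"
      unfolding D_def by (rule sum.cong[OF refl])
    also have "\<dots> = (\<Sum>l\<in>{1..m}. (if l = a then T u a x else 0)) + (\<Sum>l\<in>{1..m}. (if l = b then T v b x else 0))"
      by (rule sum.distrib)
    also have "\<dots> = T u a x + T v b x" using ab(1,2) by (simp only: sum.delta finite_atLeastAtMost if_True)
    also have "\<dots> \<le> mean_val V E (D u v) x" by (rule lip2[OF u v x nb ab pa pb])
    finally show ?thesis .
  next
    case nA: False
    have nf: "\<not> T v b x > 0" if "a\<in>{1..m}" "b\<in>{1..m}" "a \<noteq> b" "T u a x > 0" for a b
    proof
      assume "T v b x > 0"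
      with that have "\<exists>a\<in>{1..m}. \<exists>b\<in>{1..m}. a \<noteq> b \<and> T u a x > 0 \<and> T v b x > 0"
        by (intro bexI[of _ a] bexI[of _ b] conjI) auto
      with nA show False by (rule notE)
    qed
    have "\<exists>a\<in>{1..m}. \<forall>l\<in>{1..m}. l \<noteq> a \<longrightarrow> T u l x = 0 \<and> T v l x = 0"
    proof (cases "\<exists>a\<in>{1..m}. T u a x > 0")
      case True
      then obtain a where a: "a \<in> {1..m}" "T u a x > 0" by blast
      show ?thesis
      proof (intro bexI[OF _ a(1)] ballI impI conjI)
        fix l assume l: "l \<in> {1..m}" "l \<noteq> a"
        show "T u l x = 0" using seg[OF u x(1) nb a(1) l(1) _ a(2)] l by auto
        have "\<not> T v l x > 0" using nf[OF a(1) l(1) _ a(2)] l(2) by auto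
        then show "T v l x = 0" using nnV[OF l(1)] by linarith
      qed
    next
      case F2: False
      show ?thesis
      proof (cases "\<exists>b\<in>{1..m}. T v b x > 0")
        case True
        then obtain b where b: "b \<in> {1..m}" "T v b x > 0" by blast
        show ?thesis
        proof (intro bexI[OF _ b(1)] ballI impI conjI)
          fix l assume l: "l \<in> {1..m}" "l \<noteq> b"
          show "T v l x = 0" using seg[OF v x(1) nb b(1) l(1) _ b(2)] l by auto
          have "\<not> T u l x > 0" using F2 l(1) by auto
          then show "T u l x = 0" using nnU[OF l(1)] by linarith
        qed
      next
        case False
        have "\<forall>l\<in>{1..m}. T u l x = 0 \<and> T v l x = 0"
        proof
          fix l assume l: "l \<in> {1..m}"
          have "\<not> T u l x > 0" using F2 l by auto
          moreover have "\<not> T v l x > 0" using False l by auto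
          ultimately
          show "T u l x = 0 \<and> T v l x = 0" using nnU[OF l] nnV[OF l] by linarith
        qed
        then show ?thesis using m by (intro bexI[of _ 1]) auto
      qed
    qed
    then obtain a where a: "a \<in> {1..m}" and z: "\<And>l. l \<in> {1..m} \<Longrightarrow> l \<noteq> a \<Longrightarrow> T u l x = 0 \<and> T v l x = 0"
      by blast
    have "D (T u) (T v) x = (\<Sum>l\<in>{1..m}. if l = a then \<bar>T u a x - T v a x\<bar> else 0)"
      unfolding D_def by (rule sum.cong[OF refl]) (use z in simp)
    also have "\<dots> = \<bar>T u a x - T v a x\<bar>" using a by (simp only: sum.delta finite_atLeastAtMost if_True)
    also have "\<dots> \<le> mean_val V E (D u v) x" by (rule lip1[OF u v x nb a])
    finally show ?thesis .
  qed
qed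

lemma Tk_K: "u \<in> K \<Longrightarrow> (T ^^ k) u \<in> K"
  by (cases k) (auto simp: T_K)

lemma nonexp: assumes u: "u \<in> K" and v: "v \<in> K" and Q: "0 \<le> Q"
    and b: "\<And>y. y \<in> V \<Longrightarrow> D u v y \<le> Q"
  shows "y \<in> V \<Longrightarrow> D ((T ^^ k) u) ((T ^^ k) v) y \<le> Q"
proof (induction k arbitrary: y)
  case 0
  then show ?case using b by simp
next
  case (Suc k)
  have "D ((T ^^ Suc k) u) ((T ^^ Suc k) v) y \<le> mean_val V E (D ((T ^^ k) u) ((T ^^ k) v)) y"
    using lip[OF Tk_K[OF u] Tk_K[OF v] Suc.prems] by simp
  also have "\<dots> \<le> Q" by (rule mean_le_const[OF _ Q]) (use Suc.IH nb_sub in auto)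
  finally show ?case .
qed

definition c :: real where "c = 1 / real (card V)"

lemma c_pos: "0 < c" and c_le1: "c \<le> 1"
  using cardV unfolding c_def by auto

lemma contr:
  assumes u: "u \<in> K" and v: "v \<in> K" and Q: "0 \<le> Q"
    and bnd: "\<And>y. y \<in> V \<Longrightarrow> D u v y \<le> Q"
  shows "(x, bb) \<in> {(a, b). E a b} ^^ j \<Longrightarrow> bb \<in> boundary V E \<Longrightarrow> x \<in> V \<Longrightarrow> j < k
     \<Longrightarrow> D ((T ^^ k) u) ((T ^^ k) v) x \<le> Q * (1 - c ^ j)"
proof (induction j arbitrary: x k)
  case 0
  then obtain k' where k: "k = Suc k'" by (cases k) auto
  have "x \<in> boundary V E" using 0 by simp
  then show ?case unfolding k using D_T_bd by simp
next
  case (Suc n)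
  then obtain k' where k: "k = Suc k'" and nk: "n < k'" by (cases k) auto
  have cj: "c ^ Suc n \<le> 1" by (rule power_le_one) (use c_pos c_le1 in auto)
  show ?case
  proof (cases "x \<in> boundary V E")
    case True
    then show ?thesis unfolding k using D_T_bd cj Q by simp
  next
    case False
    from relpow_Suc_D2[OF Suc.prems(1)] obtain y0 where
      e: "E x y0" and w: "(y0, bb) \<in> {(a, b). E a b} ^^ n" by auto
    have y0V: "y0 \<in> V" using Ein[OF e] by simp
    have y0N: "y0 \<in> neighbours V E x" using e y0V unfolding neighbours_def by simp
    let ?g = "D ((T ^^ k') u) ((T ^^ k') v)"
    have "D ((T ^^ k) u) ((T ^^ k) v) x \<le> mean_val V E ?g x"
      unfolding k using lip[OF Tk_K[OF u] Tk_K[OF v] Suc.prems(3)] by simp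
    also have "\<dots> \<le> Q - Q * c ^ n / real (card V)"
    proof (rule mean_step[OF _ y0N])
      show "\<And>y. y \<in> neighbours V E x \<Longrightarrow> ?g y \<le> Q" using nonexp[OF u v Q bnd] nb_sub by auto
      show "?g y0 \<le> Q - Q * c ^ n" using Suc.IH[OF w Suc.prems(2) y0V nk] by (simp add: algebra_simps)
      show "0 \<le> Q * c ^ n" using Q c_pos by simp
    qed
    also have "\<dots> = Q * (1 - c ^ Suc n)" unfolding c_def by (simp add: field_simps)
    finally show ?thesis .
  qed
qed


abbreviation "RR \<equiv> {(a, b). E a b}"

lemma gd_walk: assumes "x \<in> V" "y \<in> V" shows "(x, y) \<in> RR ^^ gdist E x y"
proof -
  from conn[OF assms] obtain n where "(x, y) \<in> RR ^^ n" using rtrancl_power by blast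
  then show ?thesis unfolding gdist_def by (rule LeastI)
qed

lemma gd_le: "(x, y) \<in> RR ^^ n \<Longrightarrow> gdist E x y \<le> n"
  unfolding gdist_def by (rule Least_le)

lemma bd_ne: "boundary V E \<noteq> {}"
proof -
  let ?g = "\<lambda>p. gdist E (fst p) (snd p)"
  define Mx where "Mx = Max (?g ` (V \<times> V))"
  have fin: "finite (?g ` (V \<times> V))" using finV by auto
  have ne: "V \<times> V \<noteq> {}" using cardV by auto
  obtain p where p: "p \<in> V \<times> V" "?g p = Mx" unfolding Mx_def
    using Max_in[OF fin] ne by (metis (no_types, lifting) empty_is_image imageE)
  obtain x y where xy: "x \<in> V" "y \<in> V" "gdist E x y = Mx" using p by (cases p) auto
  have ge: "gdist E a b \<le> Mx" if "a \<in> V" "b \<in> V" for a b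
    unfolding Mx_def using that fin by (intro Max_ge) force+
  obtain a b where ab: "a \<in> V" "b \<in> V" "a \<noteq> b"
  proof -
    have "\<exists>a\<in>V. \<exists>b\<in>V. a \<noteq> b"
    proof (rule ccontr)
      assume "\<not> ?thesis"
      then have "\<forall>a\<in>V. \<forall>b\<in>V. a = b" by blast
      then have "card V \<le> 1" using card_le_Suc0_iff_eq[OF finV] by auto
      with cardV show False by simp
    qed
    then show ?thesis using that by blast
  qed
  have "gdist E a b \<noteq> 0"
  proof
    assume "gdist E a b = 0"
    with gd_walk[OF ab(1,2)] show False using ab(3) by simp
  qed
  then have "Mx > 0" using ge[OF ab(1,2)] by linarith
  then obtain n where Mn: "Mx = Suc n" by (cases Mx) auto
  have "(x, y) \<in> RR ^^ Suc n" using gd_walk[OF xy(1,2)] xy(3) Mn by simp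
  from relpow_Suc_D2[OF this]
  obtain z where z: "E x z" "(z, y) \<in> RR ^^ n" by auto
  have zV: "z \<in> V" using Ein[OF z(1)] by simp
  have zN: "z \<in> neighbours V E x" using z(1) zV unfolding neighbours_def by simp
  have "mean_val V E (\<lambda>w. real (gdist E w y)) x \<le> real Mx - 1 / real (card V)"
  proof (rule mean_step[OF _ zN])
    show "\<And>w. w \<in> neighbours V E x \<Longrightarrow> real (gdist E w y) \<le> real Mx"
      using ge xy(2) nb_sub by auto
    show "real (gdist E z y) \<le> real Mx - 1" using gd_le[OF z(2)] Mn by simp
  qed simp
  also have "\<dots> < real (gdist E x y)" using xy(3) cardV by simp
  finally have "x \<in> boundary V E" unfolding boundary_def using xy by auto
  then show ?thesis by auto
qed

definition jw :: "'a \<Rightarrow> nat" where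
  "jw x = (SOME j. \<exists>bb\<in>boundary V E. (x, bb) \<in> RR ^^ j)"

definition J :: nat where "J = Max (jw ` V)"

lemma walk: assumes x: "x \<in> V" shows "\<exists>j\<le>J. \<exists>bb\<in>boundary V E. (x, bb) \<in> RR ^^ j"
proof -
  obtain b0 where b0: "b0 \<in> boundary V E" using bd_ne by auto
  then have "b0 \<in> V" using bd_V by auto
  from conn[OF x this] obtain n where "(x, b0) \<in> RR ^^ n" using rtrancl_power by blast
  then have "\<exists>j. \<exists>bb\<in>boundary V E. (x, bb) \<in> RR ^^ j" using b0 by blast
  then have "\<exists>bb\<in>boundary V E. (x, bb) \<in> RR ^^ jw x" unfolding jw_def by (rule someI_ex)
  moreover have "jw x \<le> J" unfolding J_def using finV x by auto
  ultimately show ?thesis by blast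
qed

definition th :: real where "th = 1 - c ^ J"

lemma th: "0 \<le> th" "th < 1"
  using c_pos c_le1 unfolding th_def by (auto simp: power_le_one)

lemma C: assumes u: "u \<in> K" and v: "v \<in> K" and Q: "0 \<le> Q"
    and bnd: "\<And>y. y \<in> V \<Longrightarrow> D u v y \<le> Q" and x: "x \<in> V"
  shows "D ((T ^^ Suc J) u) ((T ^^ Suc J) v) x \<le> th * Q"
proof -
  obtain j bb where j: "j \<le> J" "bb \<in> boundary V E" "(x, bb) \<in> RR ^^ j" using walk[OF x] by blast
  have "D ((T ^^ Suc J) u) ((T ^^ Suc J) v) x \<le> Q * (1 - c ^ j)"
    using contr[OF u v Q bnd j(3) j(2) x, of "Suc J"] j(1) by (simp del: funpow.simps)
  also have "\<dots> \<le> Q * (1 - c ^ J)"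
    using power_decreasing[OF j(1), of c] c_pos c_le1 Q by (intro mult_left_mono) auto
  finally show ?thesis unfolding th_def by (simp add: mult.commute)
qed

definition agree :: "(nat \<Rightarrow> 'a \<Rightarrow> real) \<Rightarrow> (nat \<Rightarrow> 'a \<Rightarrow> real) \<Rightarrow> bool" where
  "agree u v \<longleftrightarrow> (\<forall>l\<in>{1..m}. \<forall>x\<in>V. u l x = v l x)"

lemma agree_trans: "agree u v \<Longrightarrow> agree v w \<Longrightarrow> agree u w" unfolding agree_def by auto
lemma agree_sym: "agree u v \<Longrightarrow> agree v u" unfolding agree_def by auto

lemma mean_cong: "(\<And>y. y \<in> neighbours V E x \<Longrightarrow> g y = h y) \<Longrightarrow> mean_val V E g x = mean_val V E h x"
  unfolding mean_val_def by (simp cong: sum.cong)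

lemma T_resp: assumes "agree u u'" shows "agree (T u) (T u')"
proof -
  have "sv u l x = sv u' l x" if "l \<in> {1..m}" for l x
  proof -
    have "mean_val V E (u p) x = mean_val V E (u' p) x" if "p \<in> {1..m}" for p
      using assms that nb_sub[of x] unfolding agree_def by (intro mean_cong) auto
    then show ?thesis unfolding sv_def using that by (auto intro!: sum.cong)
  qed
  then show ?thesis unfolding agree_def T_def by auto
qed

lemma Tk_resp: "agree u u' \<Longrightarrow> agree ((T ^^ k) u) ((T ^^ k) u')"
  by (induction k) (auto intro: T_resp)

lemma D_agree: "agree u u' \<Longrightarrow> agree v v' \<Longrightarrow> x \<in> V \<Longrightarrow> D u v x = D u' v' x"
  unfolding agree_def D_def by (auto intro!: sum.cong)

lemma FU: assumes u: "u \<in> K" and v: "v \<in> K"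
    and fu: "agree ((T ^^ Suc J) u) u" and fv: "agree ((T ^^ Suc J) v) v"
  shows "agree u v"
proof -
  define Q where "Q = Max (D u v ` V)"
  have fin: "finite (D u v ` V)" using finV by auto
  have bnd: "D u v y \<le> Q" if "y \<in> V" for y unfolding Q_def using fin that by auto
  obtain y0 where "y0 \<in> V" using cardV by fastforce
  then have Q0: "0 \<le> Q" using bnd[of y0] D_nonneg[of u v y0] by linarith
  have le: "D u v y \<le> th * Q" if y: "y \<in> V" for y
  proof -
    have "D u v y = D ((T ^^ Suc J) u) ((T ^^ Suc J) v) y"
      using D_agree[OF agree_sym[OF fu] agree_sym[OF fv] y] .
    also have "\<dots> \<le> th * Q" by (rule C[OF u v Q0 bnd y])
    finally show ?thesis .
  qed
  have "Q \<in> D u v ` V" unfolding Q_def using fin \<open>y0 \<in> V\<close> by (intro Max_in) auto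
  then have "Q \<le> th * Q" using le by auto
  then have "Q \<le> 0" using th Q0 by (metis mult_le_cancel_right1 not_le)
  then have "D u v y = 0" if "y \<in> V" for y using bnd[OF that] D_nonneg[of u v y] by linarith
  then have "\<bar>u l y - v l y\<bar> = 0" if "l \<in> {1..m}" "y \<in> V" for l y
    using that unfolding D_def by (subst (asm) sum_nonneg_eq_0_iff) auto
  then show ?thesis unfolding agree_def by auto
qed


lemma sol_fix: assumes "solves_S V E m H f \<phi> v" shows "v \<in> K" "agree (T v) v"
proof -
  have eq: "v l x = max (H x (sv v l x) - f l x (v l x)) 0"
    if "l \<in> {1..m}" "x \<in> V" "x \<notin> boundary V E" for l x
    using assms that unfolding solves_S_def graph_interior_def sv_def by auto
  have bd: "v l x = \<phi> l x" if "l \<in> {1..m}" "x \<in> boundary V E" for l x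
    using assms that unfolding solves_S_def by auto
  show K: "v \<in> K" unfolding K_def
  proof (intro CollectI ballI)
    fix l x assume lx: "l \<in> {1..m}" "x \<in> V"
    show "0 \<le> v l x"
    proof (cases "x \<in> boundary V E")
      case True then show ?thesis using bd[OF lx(1) True] phi_nonneg[OF lx(1) True] by simp
    next
      case False then show ?thesis using eq[OF lx False] by simp
    qed
  qed
  show "agree (T v) v" unfolding agree_def
  proof (intro ballI)
    fix l x assume lx: "l \<in> {1..m}" "x \<in> V"
    show "T v l x = v l x"
    proof (cases "x \<in> boundary V E")
      case True then show ?thesis using bd[OF lx(1) True] unfolding T_def by simp
    next
      case False
      have "\<bar>Gs l x (H x (sv v l x)) - v l x\<bar> \<le> \<bar>H x (sv v l x) - H x (sv v l x)\<bar>"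
        by (rule fixeq_lip[OF f_mono[OF lx]]) (use Gs[OF lx] eq[OF lx False] K lx in \<open>auto simp: K_def\<close>)
      then show ?thesis using False unfolding T_def by simp
    qed
  qed
qed

lemma fix_sol: assumes "agree (T u) u" shows "solves_S V E m H f \<phi> u"
  unfolding solves_S_def
proof (intro ballI conjI)
  fix l x assume l: "l \<in> {1..m}" and x: "x \<in> graph_interior V E"
  then have xV: "x \<in> V" and nb: "x \<notin> boundary V E" unfolding graph_interior_def by auto
  have "u l x = T u l x" using assms l xV unfolding agree_def by auto
  also have "\<dots> = Gs l x (H x (sv u l x))" using nb unfolding T_def by simp
  finally have ux: "u l x = Gs l x (H x (sv u l x))" .
  show "u l x = max (H x (mean_val V E (u l) x - (\<Sum>p\<in>{1..m} - {l}. mean_val V E (u p) x)) - f l x (u l x)) 0"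
  proof -
    have "u l x = max (H x (sv u l x) - f l x (u l x)) 0"
      using Gs(2)[OF l xV, of "H x (sv u l x)"] ux by simp
    then show ?thesis unfolding sv_def .
  qed
next
  fix l x assume l: "l \<in> {1..m}" and x: "x \<in> boundary V E"
  then have "x \<in> V" using bd_V by auto
  then show "u l x = \<phi> l x" using assms l x unfolding agree_def T_def by force
qed

lemma agree_refl: "agree u u" unfolding agree_def by simp

lemma fix_Tk: assumes "agree (T u) u" shows "agree ((T ^^ k) u) u"
proof (induction k)
  case 0 then show ?case by (simp add: agree_refl)
next
  case (Suc k)
  have "agree (T ((T ^^ k) u)) (T u)" by (rule T_resp[OF Suc.IH])
  then show ?case using assms by (auto intro: agree_trans)
qed

lemma existence: "\<exists>u. u \<in> K \<and> agree (T u) u"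
proof -
  define z0 :: "nat \<Rightarrow> 'a \<Rightarrow> real" where "z0 = (\<lambda>_ _. 0)"
  have z0K: "z0 \<in> K" unfolding z0_def K_def by simp
  define b where "b n = (T ^^ (Suc J * n)) z0" for n
  have bK: "b n \<in> K" for n unfolding b_def by (rule Tk_K[OF z0K])
  have bS: "b (Suc n) = (T ^^ Suc J) (b n)" for n
    unfolding b_def mult_Suc_right funpow_add by simp
  define Q0 where "Q0 = Max (D (b 1) (b 0) ` V)"
  have fin: "\<And>g :: 'a \<Rightarrow> real. finite (g ` V)" using finV by auto
  obtain y0 where y0: "y0 \<in> V" using cardV by fastforce
  have Q0b: "D (b 1) (b 0) y \<le> Q0" if "y \<in> V" for y unfolding Q0_def using fin that by auto
  have Q0n: "0 \<le> Q0" using Q0b[OF y0] D_nonneg[of "b 1" "b 0" y0] by linarith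
  have step: "\<forall>y\<in>V. D (b (Suc n)) (b n) y \<le> th ^ n * Q0" for n
  proof (induction n)
    case 0 then show ?case using Q0b by simp
  next
    case (Suc n)
    show ?case
    proof
      fix y assume y: "y \<in> V"
      have "D (b (Suc (Suc n))) (b (Suc n)) y = D ((T ^^ Suc J) (b (Suc n))) ((T ^^ Suc J) (b n)) y"
        unfolding bS[of "Suc n"] bS[of n] ..
      also have "\<dots> \<le> th * (th ^ n * Q0)"
        by (rule C[OF bK bK _ _ y]) (use Suc.IH th Q0n in auto)
      finally show "D (b (Suc (Suc n))) (b (Suc n)) y \<le> th ^ Suc n * Q0" by simp
    qed
  qed
  have conv: "convergent (\<lambda>n. b n l x)" if l: "l \<in> {1..m}" and x: "x \<in> V" for l x
  proof -
    have d: "norm (b (Suc n) l x - b n l x) \<le> Q0 * th ^ n" for n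
    proof -
      have "\<bar>b (Suc n) l x - b n l x\<bar> \<le> D (b (Suc n)) (b n) x"
        unfolding D_def using l by (intro member_le_sum) auto
      then show ?thesis using step[of n] x by (auto simp: mult.commute)
    qed
    have "summable (\<lambda>n. Q0 * th ^ n)" using th by (intro summable_mult summable_geometric) auto
    then have sm: "summable (\<lambda>n. b (Suc n) l x - b n l x)"
      by (rule summable_comparison_test'[of _ 0]) (use d in auto)
    have "(\<lambda>n. b n l x - b 0 l x) \<longlonglongrightarrow> suminf (\<lambda>n. b (Suc n) l x - b n l x)"
      using summable_LIMSEQ[OF sm] unfolding sum_lessThan_telescope[of "\<lambda>i. b i l x"] .
    then have "(\<lambda>n. (b n l x - b 0 l x) + b 0 l x) \<longlonglongrightarrow> suminf (\<lambda>n. b (Suc n) l x - b n l x) + b 0 l x"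
      by (intro tendsto_add tendsto_const)
    then show ?thesis unfolding convergent_def by auto
  qed
  define us where "us l x = lim (\<lambda>n. b n l x)" for l x
  have lim: "(\<lambda>n. b n l x) \<longlonglongrightarrow> us l x" if "l \<in> {1..m}" "x \<in> V" for l x
    using conv[OF that] unfolding us_def convergent_LIMSEQ_iff .
  have usK: "us \<in> K" unfolding K_def
  proof (intro CollectI ballI)
    fix l x assume lx: "l \<in> {1..m}" "x \<in> V"
    show "0 \<le> us l x" by (rule LIMSEQ_le_const[OF lim[OF lx]]) (use bK lx in \<open>auto simp: K_def\<close>)
  qed
  define Qn where "Qn n = (\<Sum>y\<in>V. D us (b n) y)" for n
  have Qn0: "Qn \<longlonglongrightarrow> 0"
  proof -
    have "Qn \<longlonglongrightarrow> (\<Sum>y\<in>V. \<Sum>l\<in>{1..m}. \<bar>us l y - us l y\<bar>)"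
      unfolding Qn_def D_def
      by (intro tendsto_sum tendsto_rabs tendsto_diff tendsto_const lim) auto
    then show ?thesis by simp
  qed
  have QnD: "D us (b n) y \<le> Qn n" if "y \<in> V" for n y
    unfolding Qn_def using finV that D_nonneg by (intro member_le_sum) auto
  have Qnn: "0 \<le> Qn n" for n unfolding Qn_def using D_nonneg by (intro sum_nonneg) auto
  have fixR: "agree ((T ^^ Suc J) us) us" unfolding agree_def
  proof (intro ballI)
    fix l x assume l: "l \<in> {1..m}" and x: "x \<in> V"
    have "(\<lambda>n. b (Suc n) l x - (T ^^ Suc J) us l x) \<longlonglongrightarrow> 0"
    proof (rule Lim_null_comparison[OF _ Qn0])
      show "\<forall>\<^sub>F n in sequentially. norm (b (Suc n) l x - (T ^^ Suc J) us l x) \<le> Qn n"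
      proof (intro always_eventually allI)
        fix n
        have "\<bar>(T ^^ Suc J) us l x - b (Suc n) l x\<bar> \<le> D ((T ^^ Suc J) us) ((T ^^ Suc J) (b n)) x"
          unfolding D_def bS using l by (intro member_le_sum) auto
        also have "\<dots> \<le> th * Qn n" by (rule C[OF usK bK Qnn QnD x])
        also have "\<dots> \<le> 1 * Qn n" using th Qnn[of n] by (intro mult_right_mono) auto
        finally show "norm (b (Suc n) l x - (T ^^ Suc J) us l x) \<le> Qn n" by simp
      qed
    qed
    then have "(\<lambda>n. b (Suc n) l x) \<longlonglongrightarrow> (T ^^ Suc J) us l x" by (rule LIM_zero_cancel)
    moreover have "(\<lambda>n. b (Suc n) l x) \<longlonglongrightarrow> us l x" using LIMSEQ_Suc[OF lim[OF l x]] .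
    ultimately show "(T ^^ Suc J) us l x = us l x" by (rule LIMSEQ_unique)
  qed
  have "agree ((T ^^ Suc J) (T us)) (T us)"
  proof -
    have "(T ^^ Suc J) (T us) = T ((T ^^ Suc J) us)" by (simp only: funpow_swap1)
    then show ?thesis using T_resp[OF fixR] by simp
  qed
  then have "agree (T us) us" by (rule FU[OF T_K usK _ fixR])
  then show ?thesis using usK by blast
qed

lemma main: "\<exists>u. solves_S V E m H f \<phi> u \<and>
           (\<forall>v. solves_S V E m H f \<phi> v \<longrightarrow> (\<forall>l\<in>{1..m}. \<forall>x\<in>V. v l x = u l x))"
proof -
  obtain u where u: "u \<in> K" "agree (T u) u" using existence by blast
  show ?thesis
  proof (intro exI conjI allI impI)
    show "solves_S V E m H f \<phi> u" by (rule fix_sol[OF u(2)])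
    fix v assume v: "solves_S V E m H f \<phi> v"
    have "agree v u"
      by (rule FU[OF sol_fix(1)[OF v] u(1) fix_Tk[OF sol_fix(2)[OF v]] fix_Tk[OF u(2)]])
    then show "\<forall>l\<in>{1..m}. \<forall>x\<in>V. v l x = u l x" unfolding agree_def .
  qed
qed

end

theorem theorem1:
  fixes V :: "'a set" and E :: "'a \<Rightarrow> 'a \<Rightarrow> bool" and m :: nat
    and H :: "'a \<Rightarrow> real \<Rightarrow> real" and f :: "nat \<Rightarrow> 'a \<Rightarrow> real \<Rightarrow> real"
    and \<phi> :: "nat \<Rightarrow> 'a \<Rightarrow> real"
  assumes G: "graph_ok V E"
    and m: "1 \<le> m"
    and H_cont: "\<And>x. x \<in> V \<Longrightarrow> continuous_on {0..} (H x)"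
    and f_cont: "\<And>l x. l \<in> {1..m} \<Longrightarrow> x \<in> V \<Longrightarrow> continuous_on {0..} (f l x)"
    and H0: "\<And>x. x \<in> V \<Longrightarrow> H x 0 = 0"
    and f0: "\<And>l x. l \<in> {1..m} \<Longrightarrow> x \<in> V \<Longrightarrow> f l x 0 = 0"
    and H_odd: "\<And>x s. x \<in> V \<Longrightarrow> s < 0 \<Longrightarrow> H x s = - H x (- s)"
    and f_odd: "\<And>l x s. l \<in> {1..m} \<Longrightarrow> x \<in> V \<Longrightarrow> s < 0 \<Longrightarrow> f l x s = - f l x (- s)"
    and phi_nonneg: "\<And>l x. l \<in> {1..m} \<Longrightarrow> x \<in> boundary V E \<Longrightarrow> 0 \<le> \<phi> l x"
    and phi_disj: "\<And>i j x. i \<in> {1..m} \<Longrightarrow> j \<in> {1..m} \<Longrightarrow> i \<noteq> j \<Longrightarrow>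
                      x \<in> boundary V E \<Longrightarrow> \<phi> i x * \<phi> j x = 0"
    and H_mono: "\<And>x. x \<in> V \<Longrightarrow> mono_on {0..} (H x)"
    and f_mono: "\<And>l x. l \<in> {1..m} \<Longrightarrow> x \<in> V \<Longrightarrow> mono_on {0..} (f l x)"
    and H_lip: "\<And>x s t. x \<in> V \<Longrightarrow> 0 \<le> s \<Longrightarrow> 0 \<le> t \<Longrightarrow> \<bar>H x s - H x t\<bar> \<le> \<bar>s - t\<bar>"
  shows "\<exists>u. solves_S V E m H f \<phi> u \<and>
           (\<forall>v. solves_S V E m H f \<phi> v \<longrightarrow> (\<forall>l\<in>{1..m}. \<forall>x\<in>V. v l x = u l x))"
proof -
  interpret S: sysS V E m H f \<phi>
    by (rule sysS.intro) (fact G m f_cont H0 f0 H_odd phi_nonneg H_mono f_mono H_lip)+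
  show ?thesis by (rule S.main)
qed

end
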